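(* Let $M$ be a compact Riemannian manifold and $f\colon M\to M$ a $C^1$ map. For every open cover $(U_i)_i$ of $(\overleftarrow M_f,d_1)$ there exists a partition of unity $(\rho_i)_i$ subordinate to it such that each $\rho_i\colon\overleftarrow M_f\to\mathbb R$ is $d_1$-continuous and $d_\infty$-Lipschitz.
   Context: $\overleftarrow M_f=\{(x_n)_{n\in\mathbb Z}\in M^{\mathbb Z}: f(x_n)=x_{n+1}\ \forall n\}$ with $d_1(\underline x,\underline y)=\sum_n2^{-|n|}d(x_n,y_n)$ and $d_\infty(\underline x,\underline y)=\sup_n d(x_n,y_n)$. *)

theory Defs
  imports "HOL-Analysis.Analysis"
begin

definition invlim :: "'a set \<Rightarrow> ('a \<Rightarrow> 'a) \<Rightarrow> (int \<Rightarrow> 'a) set" where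
  "invlim M f = {x. (\<forall>n. x n \<in> M) \<and> (\<forall>n. f (x n) = x (n + 1))}"

definition d1 :: "(int \<Rightarrow> 'a::metric_space) \<Rightarrow> (int \<Rightarrow> 'a) \<Rightarrow> real" where
  "d1 x y = (\<Sum>\<^sub>\<infinity> n\<in>(UNIV::int set). (1/2) ^ nat \<bar>n\<bar> * dist (x n) (y n))"

definition dinf :: "(int \<Rightarrow> 'a::metric_space) \<Rightarrow> (int \<Rightarrow> 'a) \<Rightarrow> real" where
  "dinf x y = (SUP n. dist (x n) (y n))"

definition d1_top :: "'a::metric_space set \<Rightarrow> ('a \<Rightarrow> 'a) \<Rightarrow> (int \<Rightarrow> 'a) topology" where
  "d1_top M f = Metric_space.mtopology (invlim M f) d1"

definition tsupport :: "'b topology \<Rightarrow> ('b \<Rightarrow> real) \<Rightarrow> 'b set" where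
  "tsupport T g = T closure_of {x \<in> topspace T. g x \<noteq> 0}"

definition partition_of_unity_subordinate ::
    "'b topology \<Rightarrow> ('i \<Rightarrow> 'b set) \<Rightarrow> ('i \<Rightarrow> 'b \<Rightarrow> real) \<Rightarrow> bool" where
  "partition_of_unity_subordinate T U \<rho> \<longleftrightarrow>
     (\<forall>i. continuous_map T euclideanreal (\<rho> i)) \<and>
     (\<forall>i. \<forall>x\<in>topspace T. 0 \<le> \<rho> i x) \<and>
     (\<forall>i. tsupport T (\<rho> i) \<subseteq> U i) \<and>
     (\<forall>x\<in>topspace T. \<exists>V. openin T V \<and> x \<in> V \<and>
         finite {i. tsupport T (\<rho> i) \<inter> V \<noteq> {}}) \<and>
     (\<forall>x\<in>topspace T. (\<Sum>i\<in>{i. \<rho> i x \<noteq> 0}. \<rho> i x) = 1)"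

end

theory Submission
  imports Defs
begin


lemma quot_lip:
  fixes a a' H H' D m :: real
  assumes "m > 0" "H \<ge> m" "H' \<ge> m" "0 \<le> a" "a \<le> H" "\<bar>a - a'\<bar> \<le> D" "\<bar>H - H'\<bar> \<le> D"
  shows "\<bar>a / H - a' / H'\<bar> \<le> 2 * D / m"
proof -
  have HH: "H > 0" "H' > 0" using assms by auto
  have D0: "D \<ge> 0" using assms(6) by linarith
  have eq: "a / H - a' / H' = (a * (H' - H) + H * (a - a')) / (H * H')"
  proof -
    have "a / H - a' / H' = (a * H' - a' * H) / (H * H')"
      using HH by (simp add: diff_frac_eq)
    moreover have "a * H' - a' * H = a * (H' - H) + H * (a - a')" by (simp add: algebra_simps)
    ultimately show ?thesis by simp
  qed
  have t1: "\<bar>a * (H' - H)\<bar> \<le> a * D"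
  proof -
    have "\<bar>a * (H' - H)\<bar> = a * \<bar>H' - H\<bar>" using assms(4) by (simp add: abs_mult)
    also have "\<dots> \<le> a * D" using assms(4,7) by (intro mult_left_mono) (auto simp: abs_minus_commute)
    finally show ?thesis .
  qed
  have t2: "\<bar>H * (a - a')\<bar> \<le> H * D"
  proof -
    have "\<bar>H * (a - a')\<bar> = H * \<bar>a - a'\<bar>" using HH by (simp add: abs_mult)
    also have "\<dots> \<le> H * D" using HH assms(6) by (intro mult_left_mono) auto
    finally show ?thesis .
  qed
  have t3: "a * D \<le> H * D" using assms(5) D0 by (rule mult_right_mono)
  have 1: "\<bar>a * (H' - H) + H * (a - a')\<bar> \<le> 2 * H * D"
    using t1 t2 t3 abs_triangle_ineq[of "a * (H' - H)" "H * (a - a')"] by linarith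
  have "\<bar>a / H - a' / H'\<bar> = \<bar>a * (H' - H) + H * (a - a')\<bar> / (H * H')"
    using HH unfolding eq by (simp add: abs_divide abs_mult)
  also have "\<dots> \<le> 2 * H * D / (H * H')"
    using 1 HH by (intro divide_right_mono) auto
  also have "\<dots> = 2 * D / H'" using HH by simp
  also have "\<dots> \<le> 2 * D / m"
    using D0 assms HH by (intro divide_left_mono) auto
  finally show ?thesis .
qed



lemma (in Metric_space) lip_cont:
  assumes "\<And>x y. x \<in> M \<Longrightarrow> y \<in> M \<Longrightarrow> \<bar>g x - g y\<bar> \<le> K * d x y"
  shows "continuous_map mtopology euclideanreal g"
proof -
  have "continuous_map mtopology (Metric_space.mtopology UNIV dist) g"
    unfolding metric_continuous_map[OF Met_TC.Metric_space_axioms]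
  proof (intro conjI ballI allI impI)
    show "g ` M \<subseteq> UNIV" by simp
    fix a and e :: real assume a: "a \<in> M" and e: "e > 0"
    show "\<exists>\<delta>>0. \<forall>x. x \<in> M \<and> d a x < \<delta> \<longrightarrow> dist (g a) (g x) < e"
    proof (intro exI[of _ "e / (\<bar>K\<bar> + 1)"] conjI allI impI)
      show "e / (\<bar>K\<bar> + 1) > 0" using e by simp
      fix x assume x: "x \<in> M \<and> d a x < e / (\<bar>K\<bar> + 1)"
      have "dist (g a) (g x) \<le> K * d a x" using assms[of a x] a x by (simp add: dist_real_def)
      also have "\<dots> \<le> \<bar>K\<bar> * d a x" by (intro mult_right_mono) auto
      also have "\<dots> \<le> (\<bar>K\<bar> + 1) * d a x" by (intro mult_right_mono) auto
      also have "\<dots> < (\<bar>K\<bar> + 1) * (e / (\<bar>K\<bar> + 1))" using x by (intro mult_strict_left_mono) auto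
      also have "\<dots> = e" by simp
      finally show "dist (g a) (g x) < e" .
    qed
  qed
  then show ?thesis by simp
qed



lemma (in Metric_space) partition_lip:
  fixes U :: "'i \<Rightarrow> 'a set"
  assumes cpt: "compact_space mtopology" and opn: "\<And>i. openin mtopology (U i)"
    and cov: "(\<Union>i. U i) = M"
  shows "\<exists>\<rho>. partition_of_unity_subordinate mtopology U \<rho> \<and>
             (\<forall>i. \<exists>K. \<forall>x\<in>M. \<forall>y\<in>M. \<bar>\<rho> i x - \<rho> i y\<bar> \<le> K * d x y)"
proof -
  have "\<forall>x\<in>M. \<exists>i r. r > 0 \<and> mball x (3*r) \<subseteq> U i"
  proof
    fix x assume "x \<in> M"
    then obtain i where "x \<in> U i" using cov by auto
    then obtain r where r: "r>0" "mball x r \<subseteq> U i" using opn openin_mtopology by blast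
    show "\<exists>i r. r > 0 \<and> mball x (3*r) \<subseteq> U i"
      by (rule exI[of _ i], rule exI[of _ "r/3"]) (use r in auto)
  qed
  then obtain ix r where ixr: "\<And>x. x\<in>M \<Longrightarrow> r x > 0 \<and> mball x (3 * r x) \<subseteq> U (ix x)"
    by metis
  have "M \<subseteq> \<Union> ((\<lambda>x. mball x (r x)) ` M)" using ixr by force
  moreover have "\<forall>V\<in>(\<lambda>x. mball x (r x)) ` M. openin mtopology V" by auto
  ultimately obtain F where F: "finite F" "F \<subseteq> (\<lambda>x. mball x (r x)) ` M" "M \<subseteq> \<Union>F"
    using cpt unfolding compact_space_def compactin_def by (metis topspace_mtopology)
  then obtain C where C: "finite C" "C \<subseteq> M" "F = (\<lambda>x. mball x (r x)) ` C"
    by (meson finite_subset_image)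
  have Ccov: "\<exists>c\<in>C. d c y < r c" if "y \<in> M" for y
  proof -
    have "y \<in> (\<Union>x\<in>C. mball x (r x))" using F(3) C(3) that by (simp add: subset_iff)
    then show ?thesis by auto
  qed
  define m where "m = (if C = {} then 1 else Min (r ` C))"
  have m0: "m > 0" using C ixr by (auto simp: m_def)
  have mle: "m \<le> r c" if "c \<in> C" for c using C that by (auto simp: m_def)
  define h where "h c y = max 0 (2 * r c - d y c)" for c y
  define H where "H y = (\<Sum>c\<in>C. h c y)" for y
  define a where "a i y = (\<Sum>c\<in>{c\<in>C. ix c = i}. h c y)" for i y
  define \<rho> where "\<rho> i y = a i y / H y" for i y
  have h0: "h c y \<ge> 0" for c y by (simp add: h_def)
  have hlip: "\<bar>h c y - h c z\<bar> \<le> d y z" if "c \<in> M" "y \<in> M" "z \<in> M" for c y z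
  proof -
    have "\<bar>d y c - d c z\<bar> \<le> d y z" using mdist_reverse_triangle that by blast
    then have "\<bar>d y c - d z c\<bar> \<le> d y z" using commute[of c z] by simp
    then show ?thesis unfolding h_def by linarith
  qed
  have Hlow: "H y \<ge> m" if yM: "y \<in> M" for y
  proof -
    obtain c where c: "c \<in> C" "d c y < r c" using Ccov[OF yM] by blast
    have "m \<le> r c" using mle c by simp
    also have "r c \<le> h c y" using c commute[of c y] by (simp add: h_def)
    also have "h c y \<le> H y" unfolding H_def using C(1) c(1) h0
      by (intro member_le_sum) auto
    finally show ?thesis .
  qed
  have aH: "0 \<le> a i y \<and> a i y \<le> H y" for i y
    unfolding a_def H_def using C(1) h0
    by (auto intro: sum_nonneg sum_mono2)
  have sumlip: "\<bar>(\<Sum>c\<in>S. h c y) - (\<Sum>c\<in>S. h c z)\<bar> \<le> real (card C) * d y z"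
    if "S \<subseteq> C" "y \<in> M" "z \<in> M" for S y z
  proof -
    have fS: "finite S" using that C(1) finite_subset by blast
    have "\<bar>(\<Sum>c\<in>S. h c y) - (\<Sum>c\<in>S. h c z)\<bar> = \<bar>\<Sum>c\<in>S. h c y - h c z\<bar>"
      by (simp add: sum_subtractf)
    also have "\<dots> \<le> (\<Sum>c\<in>S. \<bar>h c y - h c z\<bar>)" by (rule sum_abs)
    also have "\<dots> \<le> (\<Sum>c\<in>S. d y z)"
      using that C(2) hlip by (intro sum_mono) blast
    also have "\<dots> = real (card S) * d y z" by simp
    also have "\<dots> \<le> real (card C) * d y z"
      using card_mono[OF C(1) that(1)] by (intro mult_right_mono) auto
    finally show ?thesis .
  qed
  have rholip: "\<bar>\<rho> i y - \<rho> i z\<bar> \<le> (2 * real (card C) / m) * d y z" if "y \<in> M" "z \<in> M" for i y z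
  proof -
    have "\<bar>a i y / H y - a i z / H z\<bar> \<le> 2 * (real (card C) * d y z) / m"
    proof (rule quot_lip)
      show "\<bar>a i y - a i z\<bar> \<le> real (card C) * d y z"
        unfolding a_def using that by (intro sumlip) auto
      show "\<bar>H y - H z\<bar> \<le> real (card C) * d y z"
        unfolding H_def using that by (intro sumlip) auto
    qed (use m0 Hlow aH that in auto)
    then show ?thesis by (simp add: \<rho>_def)
  qed
  have supp: "tsupport mtopology (\<rho> i) \<subseteq> U i" for i
  proof -
    let ?T = "\<Union>c\<in>{c\<in>C. ix c = i}. mcball c (2 * r c)"
    have "{x \<in> topspace mtopology. \<rho> i x \<noteq> 0} \<subseteq> ?T"
    proof
      fix x assume x: "x \<in> {x \<in> topspace mtopology. \<rho> i x \<noteq> 0}"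
      then have "a i x \<noteq> 0" by (auto simp: \<rho>_def)
      then obtain c where c: "c \<in> {c\<in>C. ix c = i}" "h c x \<noteq> 0" unfolding a_def
        by (rule sum.not_neutral_contains_not_neutral)
      then have c: "c \<in> C" "ix c = i" "h c x \<noteq> 0" by auto
      then have "d x c \<le> 2 * r c" by (cases "d x c \<le> 2 * r c") (auto simp: h_def)
      then have "d c x \<le> 2 * r c" using commute[of c x] by simp
      then have "x \<in> mcball c (2 * r c)" using c x C(2) by auto
      then show "x \<in> ?T" using c by blast
    qed
    moreover have "closedin mtopology ?T"
      using C(1) by (intro closedin_Union) auto
    ultimately have "tsupport mtopology (\<rho> i) \<subseteq> ?T"
      unfolding tsupport_def by (rule closure_of_minimal)
    also have "?T \<subseteq> U i"
    proof
      fix x assume "x \<in> ?T"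
      then obtain c where c: "c \<in> C" "ix c = i" "x \<in> mcball c (2 * r c)" by auto
      have "mcball c (2 * r c) \<subseteq> mball c (3 * r c)"
        using ixr[of c] c C(2) by (intro mcball_subset_mball_concentric) auto
      then show "x \<in> U i" using ixr[of c] c C(2) by auto
    qed
    finally show ?thesis .
  qed
  have zero_out: "\<rho> i y = 0" if "i \<notin> ix ` C" for i y
  proof -
    have "{c\<in>C. ix c = i} = {}" using that by auto
    then have "a i y = 0" unfolding a_def by (metis sum.empty)
    then show ?thesis by (simp add: \<rho>_def)
  qed
  have part: "partition_of_unity_subordinate mtopology U \<rho>"
    unfolding partition_of_unity_subordinate_def
  proof (intro conjI allI ballI)
    fix i
    show "continuous_map mtopology euclideanreal (\<rho> i)"
      by (rule lip_cont, rule rholip)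
    show "tsupport mtopology (\<rho> i) \<subseteq> U i" by (rule supp)
  next
    fix i x assume "x \<in> topspace mtopology"
    then show "0 \<le> \<rho> i x" using aH[of i x] Hlow[of x] m0 unfolding \<rho>_def
      by (intro divide_nonneg_nonneg) auto
  next
    fix x assume x: "x \<in> topspace mtopology"
    show "\<exists>V. openin mtopology V \<and> x \<in> V \<and> finite {i. tsupport mtopology (\<rho> i) \<inter> V \<noteq> {}}"
    proof (intro exI conjI)
      show "openin mtopology M" by (metis openin_topspace topspace_mtopology)
      show "x \<in> M" using x by simp
      have "{i. tsupport mtopology (\<rho> i) \<inter> M \<noteq> {}} \<subseteq> ix ` C"
      proof
        fix i assume i: "i \<in> {i. tsupport mtopology (\<rho> i) \<inter> M \<noteq> {}}"
        show "i \<in> ix ` C"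
        proof (rule ccontr)
          assume "i \<notin> ix ` C"
          then have e: "{x \<in> topspace mtopology. \<rho> i x \<noteq> 0} = {}" using zero_out by auto
          have "tsupport mtopology (\<rho> i) = {}" unfolding tsupport_def e by simp
          with i show False by simp
        qed
      qed
      then show "finite {i. tsupport mtopology (\<rho> i) \<inter> M \<noteq> {}}"
        using C(1) finite_subset by blast
    qed
  next
    fix x assume x: "x \<in> topspace mtopology"
    then have xM: "x \<in> M" by simp
    have Hpos: "H x > 0" using Hlow[OF xM] m0 by linarith
    have "(\<Sum>i\<in>{i. \<rho> i x \<noteq> 0}. \<rho> i x) = (\<Sum>i\<in>ix ` C. \<rho> i x)"
      using zero_out C(1) by (intro sum.mono_neutral_left) auto
    also have "\<dots> = (\<Sum>i\<in>ix ` C. a i x) / H x"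
      by (simp add: \<rho>_def sum_divide_distrib)
    also have "(\<Sum>i\<in>ix ` C. a i x) = H x"
      unfolding a_def H_def using sum.image_gen[OF C(1), of "\<lambda>c. h c x" ix] by simp
    finally show "(\<Sum>i\<in>{i. \<rho> i x \<noteq> 0}. \<rho> i x) = 1" using Hpos by simp
  qed
  show ?thesis using part rholip by blast
qed



definition wt :: "int \<Rightarrow> real" where "wt n = (1/2) ^ nat \<bar>n\<bar>"

lemma wt_pos: "wt n > 0" by (simp add: wt_def)
lemma wt_le1: "wt n \<le> 1" by (simp add: wt_def power_le_one)

lemma wt_sum_sym: "(\<Sum>n\<in>{-int N..int N}. wt n) = 3 - 2 * (1/2)^N"
proof (induction N)
  case 0
  then show ?case by (simp add: wt_def)
next
  case (Suc N)
  have e: "{-int (Suc N)..int (Suc N)} = insert (-int (Suc N)) (insert (int (Suc N)) {-int N..int N})"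
    by auto
  have "(\<Sum>n\<in>{-int (Suc N)..int (Suc N)}. wt n)
      = wt (-int (Suc N)) + (wt (int (Suc N)) + (\<Sum>n\<in>{-int N..int N}. wt n))"
    unfolding e by (simp add: sum.insert)
  also have "wt (-int (Suc N)) = (1/2)^(Suc N)" unfolding wt_def by (simp del: of_nat_Suc)
  also have "wt (int (Suc N)) = (1/2)^(Suc N)" unfolding wt_def by (simp del: of_nat_Suc)
  finally show ?case using Suc by simp
qed

lemma wt_summable: "wt summable_on UNIV"
proof (rule nonneg_bdd_above_summable_on)
  show "0 \<le> wt x" for x using wt_pos[of x] by simp
  show "bdd_above (sum wt ` {F. F \<subseteq> UNIV \<and> finite F})"
  proof (rule bdd_aboveI)
    fix s assume "s \<in> sum wt ` {F. F \<subseteq> UNIV \<and> finite F}"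
    then obtain F where F: "finite F" "s = sum wt F" by auto
    define N where "N = nat (\<Sum>n\<in>F. \<bar>n\<bar>)"
    have "F \<subseteq> {-int N..int N}"
    proof
      fix n assume n: "n \<in> F"
      have "\<bar>n\<bar> \<le> (\<Sum>n\<in>F. \<bar>n\<bar>)" using F(1) n by (intro member_le_sum) auto
      then show "n \<in> {-int N..int N}" unfolding N_def by auto
    qed
    then have "sum wt F \<le> (\<Sum>n\<in>{-int N..int N}. wt n)"
      using wt_pos by (intro sum_mono2) (auto intro: less_imp_le)
    also have "\<dots> \<le> 3" unfolding wt_sum_sym by simp
    finally show "s \<le> 3" using F by simp
  qed
qed

lemma d1_alt: "d1 x y = infsum (\<lambda>n. wt n * dist (x n) (y n)) UNIV"
  by (simp add: d1_def wt_def)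

locale bnd_set =
  fixes M :: "'a::metric_space set" and B :: real
  assumes B: "\<And>a b. a \<in> M \<Longrightarrow> b \<in> M \<Longrightarrow> dist a b \<le> B" and B0: "B \<ge> 0"
begin

definition P where "P = {x::int\<Rightarrow>'a. \<forall>n. x n \<in> M}"

lemma term_summable:
  assumes "x \<in> P" "y \<in> P"
  shows "(\<lambda>n. wt n * dist (x n) (y n)) summable_on A"
proof -
  have "(\<lambda>n. wt n * dist (x n) (y n)) summable_on UNIV"
  proof (rule summable_on_comparison_test)
    show "(\<lambda>n. wt n * B) summable_on UNIV" by (rule summable_on_cmult_left[OF wt_summable])
    show "wt n * dist (x n) (y n) \<le> wt n * B" for n
      using assms B[of "x n" "y n"] wt_pos[of n] unfolding P_def by (intro mult_left_mono) auto
    show "0 \<le> wt n * dist (x n) (y n)" for n using wt_pos[of n] by simp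
  qed
  then show ?thesis by (rule summable_on_subset) auto
qed

lemma d1_nonneg: "0 \<le> d1 x y"
  unfolding d1_alt using wt_pos by (intro infsum_nonneg) (simp add: less_imp_le)

lemma d1_ge_term:
  assumes "x \<in> P" "y \<in> P"
  shows "wt n * dist (x n) (y n) \<le> d1 x y"
proof -
  have "infsum (\<lambda>n. wt n * dist (x n) (y n)) {n} \<le> infsum (\<lambda>n. wt n * dist (x n) (y n)) UNIV"
    by (rule infsum_mono_neutral) (auto simp: term_summable[OF assms] intro!: mult_nonneg_nonneg wt_pos[THEN less_imp_le])
  then show ?thesis by (simp add: d1_alt)
qed

lemma d1_metric: "Metric_space P d1"
proof
  show "0 \<le> d1 x y" for x y by (rule d1_nonneg)
  show "d1 x y = d1 y x" for x y by (simp add: d1_def dist_commute)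
  show "d1 x y = 0 \<longleftrightarrow> x = y" if "x \<in> P" "y \<in> P" for x y
  proof
    assume 0: "d1 x y = 0"
    show "x = y"
    proof
      fix n
      have "wt n * dist (x n) (y n) \<le> 0" using d1_ge_term[OF that, of n] 0 by simp
      then have "dist (x n) (y n) \<le> 0" using wt_pos[of n]
        by (simp add: mult_le_0_iff)
      then show "x n = y n" by simp
    qed
  next
    assume "x = y" then show "d1 x y = 0" by (simp add: d1_def)
  qed
  show "d1 x z \<le> d1 x y + d1 y z" if "x \<in> P" "y \<in> P" "z \<in> P" for x y z
  proof -
    have "d1 x z \<le> infsum (\<lambda>n. wt n * dist (x n) (y n) + wt n * dist (y n) (z n)) UNIV"
      unfolding d1_alt
    proof (rule infsum_mono)
      show "(\<lambda>n. wt n * dist (x n) (z n)) summable_on UNIV" using term_summable that by blast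
      show "(\<lambda>n. wt n * dist (x n) (y n) + wt n * dist (y n) (z n)) summable_on UNIV"
        using term_summable that by (intro summable_on_add) blast+
      show "wt n * dist (x n) (z n) \<le> wt n * dist (x n) (y n) + wt n * dist (y n) (z n)" for n
        using wt_pos[of n] dist_triangle[of "x n" "z n" "y n"]
        by (simp add: distrib_left[symmetric] mult_left_mono)
    qed
    also have "\<dots> = d1 x y + d1 y z" unfolding d1_alt
      using term_summable that by (intro infsum_add) blast+
    finally show ?thesis .
  qed
qed

lemma dist_le_dinf:
  assumes "x \<in> P" "y \<in> P"
  shows "dist (x n) (y n) \<le> dinf x y"
  unfolding dinf_def
proof (rule cSUP_upper)
  show "bdd_above (range (\<lambda>n. dist (x n) (y n)))"
    using assms B unfolding P_def by (intro bdd_aboveI) auto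
qed auto

lemma d1_le_dinf:
  assumes "x \<in> P" "y \<in> P"
  shows "d1 x y \<le> infsum wt UNIV * dinf x y"
proof -
  have "d1 x y \<le> infsum (\<lambda>n. wt n * dinf x y) UNIV"
    unfolding d1_alt
  proof (rule infsum_mono)
    show "(\<lambda>n. wt n * dist (x n) (y n)) summable_on UNIV" using term_summable assms by blast
    show "(\<lambda>n. wt n * dinf x y) summable_on UNIV" by (rule summable_on_cmult_left[OF wt_summable])
    show "wt n * dist (x n) (y n) \<le> wt n * dinf x y" for n
      using wt_pos[of n] dist_le_dinf[OF assms] by (intro mult_left_mono) (auto intro: less_imp_le)
  qed
  also have "\<dots> = infsum wt UNIV * dinf x y"
    using wt_summable by (intro infsum_cmult_left) auto
  finally show ?thesis .
qed

lemma d1_converge: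
  assumes xk: "\<And>k. x k \<in> P" and l: "l \<in> P" and conv: "\<And>n. (\<lambda>k. x k n) \<longlonglongrightarrow> l n"
    and e: "e > 0"
  shows "eventually (\<lambda>k. d1 (x k) l < e) sequentially"
proof -
  define \<delta> where "\<delta> = e / (2 * (B + 1))"
  have \<delta>: "\<delta> > 0" using e B0 by (simp add: \<delta>_def)
  obtain F where F: "finite F" "dist (sum wt F) (infsum wt UNIV) \<le> \<delta>"
    using infsum_finite_approximation[OF wt_summable \<delta>] by blast
  have Sdec: "infsum wt UNIV = sum wt F + infsum wt (- F)"
  proof -
    have "infsum wt (F \<union> - F) = infsum wt F + infsum wt (- F)"
    proof (rule infsum_Un_disjoint)
      show "wt summable_on F" using F(1) by simp
      show "wt summable_on (- F)" by (rule summable_on_subset[OF wt_summable]) simp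
    qed simp
    then show ?thesis using F(1) by simp
  qed
  have tail: "infsum wt (- F) \<le> \<delta>" using F(2) Sdec by (simp add: dist_real_def)
  have "((\<lambda>k. \<Sum>n\<in>F. dist (x k n) (l n)) \<longlongrightarrow> 0) sequentially"
    by (intro tendsto_null_sum, subst tendsto_dist_iff[symmetric], rule conv)
  then have ev: "eventually (\<lambda>k. (\<Sum>n\<in>F. dist (x k n) (l n)) < e / 2) sequentially"
    using e by (intro order_tendstoD(2)) auto
  show ?thesis
  proof (rule eventually_mono[OF ev])
    fix k assume k: "(\<Sum>n\<in>F. dist (x k n) (l n)) < e / 2"
    let ?g = "\<lambda>n. wt n * dist (x k n) (l n)"
    have "d1 (x k) l = infsum ?g (F \<union> - F)" by (simp add: d1_alt)
    also have "\<dots> = infsum ?g F + infsum ?g (- F)"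
      using term_summable[OF xk l] by (intro infsum_Un_disjoint) auto
    also have "infsum ?g F = (\<Sum>n\<in>F. ?g n)" using F(1) by simp
    also have "\<dots> \<le> (\<Sum>n\<in>F. dist (x k n) (l n))"
      using wt_le1 by (intro sum_mono mult_left_le_one_le) (auto intro: less_imp_le wt_pos)
    also have "infsum ?g (- F) \<le> infsum (\<lambda>n. wt n * B) (- F)"
    proof (rule infsum_mono)
      show "?g summable_on - F" by (rule term_summable[OF xk l])
      show "(\<lambda>n. wt n * B) summable_on - F"
        by (rule summable_on_cmult_left, rule summable_on_subset[OF wt_summable]) auto
      show "?g n \<le> wt n * B" for n
        using xk l B wt_pos[of n] unfolding P_def by (intro mult_left_mono) (auto intro: less_imp_le)
    qed
    also have "infsum (\<lambda>n. wt n * B) (- F) = infsum wt (- F) * B"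
      by (intro infsum_cmult_left summable_on_subset[OF wt_summable]) auto
    also have "infsum wt (- F) * B \<le> \<delta> * B" using tail B0 by (rule mult_right_mono)
    finally have "d1 (x k) l \<le> (\<Sum>n\<in>F. dist (x k n) (l n)) + \<delta> * B" by simp
    moreover have "\<delta> * B < e / 2"
    proof -
      have "\<delta> * B = e * B / (2 * (B + 1))" by (simp add: \<delta>_def)
      also have "\<dots> < e / 2" using e B0 by (simp add: field_simps)
      finally show ?thesis .
    qed
    ultimately show "d1 (x k) l < e" using k by linarith
  qed
qed

end



theorem corollary2:
  fixes M :: "'a::metric_space set" and f :: "'a \<Rightarrow> 'a" and U :: "'i \<Rightarrow> (int \<Rightarrow> 'a) set"
  assumes "compact M" and "f ` M \<subseteq> M" and "continuous_on M f"
    and "\<exists>L. L-lipschitz_on M f"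
    and "\<forall>i. openin (d1_top M f) (U i)"
    and "(\<Union>i. U i) = invlim M f"
  shows "\<exists>\<rho>. partition_of_unity_subordinate (d1_top M f) U \<rho> \<and>
             (\<forall>i. \<exists>L. \<forall>x\<in>invlim M f. \<forall>y\<in>invlim M f.
                 \<bar>\<rho> i x - \<rho> i y\<bar> \<le> L * dinf x y)"
proof -
  let ?X = "invlim M f"
  obtain B0 where B0: "\<forall>a\<in>M. \<forall>b\<in>M. dist a b \<le> B0"
    using compact_imp_bounded[OF assms(1)] bounded_two_points by metis
  define B where "B = max B0 0"
  interpret bs: bnd_set M B
  proof
    show "dist a b \<le> B" if "a \<in> M" "b \<in> M" for a b using B0 that by (force simp: B_def)
    show "0 \<le> B" by (simp add: B_def)
  qed
  have XP: "?X \<subseteq> bs.P" by (auto simp: invlim_def bs.P_def)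
  interpret X: Metric_space ?X d1
    by (rule Metric_space.subspace[OF bs.d1_metric XP])
  have top: "d1_top M f = X.mtopology" by (simp add: d1_top_def)
  have cP: "compact bs.P"
  proof -
    have e: "bs.P = PiE UNIV (\<lambda>_::int. M)" by (auto simp: bs.P_def PiE_def extensional_def)
    have "compactin (product_topology (\<lambda>_. euclidean) UNIV) (PiE UNIV (\<lambda>_::int. M))"
      using assms(1) by (simp add: compactin_PiE)
    then show ?thesis unfolding e euclidean_product_topology by simp
  qed
  have cpt: "compact_space X.mtopology"
    unfolding X.compact_space_sequentially
  proof (intro allI impI)
    fix \<sigma> :: "nat \<Rightarrow> int \<Rightarrow> 'a" assume \<sigma>: "range \<sigma> \<subseteq> ?X"
    have "seq_compact bs.P" using cP by (rule compact_imp_seq_compact)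
    moreover have "\<forall>n. \<sigma> n \<in> bs.P" using \<sigma> XP by auto
    ultimately obtain l r where l: "l \<in> bs.P" "strict_mono r" "(\<sigma> \<circ> r) \<longlonglongrightarrow> l"
      unfolding seq_compact_def by metis
    have coord: "(\<lambda>k. (\<sigma> \<circ> r) k n) \<longlonglongrightarrow> l n" for n
      using continuous_on_tendsto_compose[OF continuous_on_product_coordinates l(3)] by simp
    have inM: "(\<sigma> \<circ> r) k n \<in> M" for k n using \<sigma> by (auto simp: invlim_def)
    have lX: "l \<in> ?X"
      unfolding invlim_def
    proof (intro CollectI conjI allI)
      show "l n \<in> M" for n using l(1) by (simp add: bs.P_def)
      fix n
      have "(\<lambda>k. f ((\<sigma> \<circ> r) k n)) \<longlonglongrightarrow> f (l n)"
        by (rule continuous_on_tendsto_compose[OF assms(3) coord]) (use inM l(1) in \<open>auto simp: bs.P_def\<close>)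
      moreover have "(\<lambda>k. f ((\<sigma> \<circ> r) k n)) = (\<lambda>k. (\<sigma> \<circ> r) k (n+1))"
        using \<sigma> by (auto simp: invlim_def)
      ultimately show "f (l n) = l (n+1)" using coord[of "n+1"] LIMSEQ_unique by metis
    qed
    have "limitin X.mtopology (\<sigma> \<circ> r) l sequentially"
      unfolding X.limitin_metric
    proof (intro conjI allI impI lX)
      fix e :: real assume e: "e > 0"
      have "eventually (\<lambda>k. d1 ((\<sigma> \<circ> r) k) l < e) sequentially"
        by (rule bs.d1_converge[OF _ l(1) coord e]) (use \<sigma> XP in auto)
      then show "eventually (\<lambda>k. (\<sigma> \<circ> r) k \<in> ?X \<and> d1 ((\<sigma> \<circ> r) k) l < e) sequentially"
        by (rule eventually_mono) (use \<sigma> in auto)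
    qed
    then show "\<exists>l r. l \<in> ?X \<and> strict_mono r \<and> limitin X.mtopology (\<sigma> \<circ> r) l sequentially"
      using lX l(2) by blast
  qed
  have opn: "\<And>i. openin X.mtopology (U i)" using assms(5) top by simp
  obtain \<rho> where \<rho>: "partition_of_unity_subordinate X.mtopology U \<rho>"
      "\<forall>i. \<exists>K. \<forall>x\<in>?X. \<forall>y\<in>?X. \<bar>\<rho> i x - \<rho> i y\<bar> \<le> K * d1 x y"
    using X.partition_lip[OF cpt opn assms(6)] by blast
  have "\<exists>L. \<forall>x\<in>?X. \<forall>y\<in>?X. \<bar>\<rho> i x - \<rho> i y\<bar> \<le> L * dinf x y" for i
  proof -
    obtain K where K: "\<forall>x\<in>?X. \<forall>y\<in>?X. \<bar>\<rho> i x - \<rho> i y\<bar> \<le> K * d1 x y" using \<rho>(2) by blast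
    show ?thesis
    proof (intro exI ballI)
      fix x y assume x: "x \<in> ?X" and y: "y \<in> ?X"
      have "\<bar>\<rho> i x - \<rho> i y\<bar> \<le> K * d1 x y" using K x y by blast
      also have "\<dots> \<le> \<bar>K\<bar> * d1 x y" using bs.d1_nonneg[of x y] by (intro mult_right_mono) auto
      also have "\<dots> \<le> \<bar>K\<bar> * (infsum wt UNIV * dinf x y)"
        using bs.d1_le_dinf[of x y] x y XP by (intro mult_left_mono) auto
      also have "\<dots> = (\<bar>K\<bar> * infsum wt UNIV) * dinf x y" by simp
      finally show "\<bar>\<rho> i x - \<rho> i y\<bar> \<le> (\<bar>K\<bar> * infsum wt UNIV) * dinf x y" .
    qed
  qed
  then show ?thesis using \<rho>(1) top by auto
qed


end
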